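(* Let $X$ be a compact metric space and $f\colon X\to X$ continuous. If $(X,f)$ has any one of the following properties, then it has property $P_e$: (1) two-sided limit shadowing; (2) two-sided orbital limit shadowing; (3) $\delta$-restricted two-sided orbital limit shadowing.
   Context: A full trajectory is a sequence $\langle x_i\rangle_{i\in\mathbb Z}$ in $X$ with $f(x_i)=x_{i+1}$ for all $i$. For a two-sided sequence, $\omega(\langle x_i\rangle)=\bigcap_{M\in\mathbb N}\overline{\{x_n:n>M\}}$, $\alpha(\langle x_i\rangle)=\bigcap_{M\in\mathbb N}\overline{\{x_n:n<-M\}}$. $ICT_f$ is the set of nonempty closed internally chain transitive sets, where $A$ is internally chain transitive if for all $a,b\in A$ and $\delta>0$ there exist $x_0=a,\dots,x_N=b$ in $A$, $N\ge1$, with $d(f(x_i),x_{i+1})<\delta$. Property $P_e$: for every $A\in ICT_f$ there is a full trajectory $\langle x_i\rangle$ with $\alpha(\langle x_i\rangle)=\omega(\langle x_i\rangle)=A$. A two-sided asymptotic pseudo-orbit is $\langle x_i\rangle_{i\in\mathbb Z}$ with $d(f(x_i),x_{i+1})\to0$ as $i\to\pm\infty$; it is a two-sided asymptotic $\delta$-pseudo-orbit if moreover $d(f(x_i),x_{i+1})<\delta$ for all $i\in\mathbb Z$. Two-sided limit shadowing: every two-sided asymptotic pseudo-orbit $\langle x_i\rangle$ admits a full trajectory $\langle z_i\rangle$ with $d(z_i,x_i)\to0$ as $i\to\pm\infty$. Two-sided orbital limit shadowing: every two-sided asymptotic pseudo-orbit $\langle x_i\rangle$ admits a full trajectory $\langle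 z_i\rangle$ with $\alpha(\langle z_i\rangle)=\alpha(\langle x_i\rangle)$ and $\omega(\langle z_i\rangle)=\omega(\langle x_i\rangle)$. $\delta$-restricted two-sided orbital limit shadowing: there exists $\delta>0$ such that every two-sided asymptotic $\delta$-pseudo-orbit $\langle x_i\rangle$ admits a full trajectory $\langle z_i\rangle$ with $\alpha(\langle z_i\rangle)=\alpha(\langle x_i\rangle)$ and $\omega(\langle z_i\rangle)=\omega(\langle x_i\rangle)$. *)

theory Defs
  imports "HOL-Analysis.Analysis"
begin

definition full_trajectory :: "'a set \<Rightarrow> ('a \<Rightarrow> 'a) \<Rightarrow> (int \<Rightarrow> 'a) \<Rightarrow> bool" where
  "full_trajectory X f x \<longleftrightarrow> (\<forall>i. x i \<in> X \<and> f (x i) = x (i + 1))"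

definition omega_limit :: "(int \<Rightarrow> 'a::metric_space) \<Rightarrow> 'a set" where
  "omega_limit x = (\<Inter>M::nat. closure {x n | n. n > int M})"

definition alpha_limit :: "(int \<Rightarrow> 'a::metric_space) \<Rightarrow> 'a set" where
  "alpha_limit x = (\<Inter>M::nat. closure {x n | n. n < - int M})"

definition internally_chain_transitive :: "('a::metric_space \<Rightarrow> 'a) \<Rightarrow> 'a set \<Rightarrow> bool" where
  "internally_chain_transitive f A \<longleftrightarrow>
     (\<forall>a\<in>A. \<forall>b\<in>A. \<forall>\<delta>>0. \<exists>N::nat. \<exists>c::nat \<Rightarrow> 'a. N \<ge> 1 \<and> c 0 = a \<and> c N = b \<and>
        (\<forall>i\<le>N. c i \<in> A) \<and> (\<forall>i<N. dist (f (c i)) (c (Suc i)) < \<delta>))"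

definition ICT :: "'a set \<Rightarrow> ('a::metric_space \<Rightarrow> 'a) \<Rightarrow> 'a set set" where
  "ICT X f = {A. A \<subseteq> X \<and> A \<noteq> {} \<and> closed A \<and> internally_chain_transitive f A}"

definition property_Pe :: "'a set \<Rightarrow> ('a::metric_space \<Rightarrow> 'a) \<Rightarrow> bool" where
  "property_Pe X f \<longleftrightarrow> (\<forall>A\<in>ICT X f. \<exists>x. full_trajectory X f x \<and>
      alpha_limit x = A \<and> omega_limit x = A)"

definition two_sided_asymptotic_pseudo_orbit :: "'a set \<Rightarrow> ('a::metric_space \<Rightarrow> 'a) \<Rightarrow> (int \<Rightarrow> 'a) \<Rightarrow> bool" where
  "two_sided_asymptotic_pseudo_orbit X f x \<longleftrightarrow> (\<forall>i. x i \<in> X) \<and>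
     ((\<lambda>i. dist (f (x i)) (x (i + 1))) \<longlongrightarrow> 0) at_top \<and>
     ((\<lambda>i. dist (f (x i)) (x (i + 1))) \<longlongrightarrow> 0) at_bot"

definition two_sided_asymptotic_delta_pseudo_orbit :: "'a set \<Rightarrow> ('a::metric_space \<Rightarrow> 'a) \<Rightarrow> real \<Rightarrow> (int \<Rightarrow> 'a) \<Rightarrow> bool" where
  "two_sided_asymptotic_delta_pseudo_orbit X f \<delta> x \<longleftrightarrow> two_sided_asymptotic_pseudo_orbit X f x \<and>
     (\<forall>i. dist (f (x i)) (x (i + 1)) < \<delta>)"

definition two_sided_limit_shadowing :: "'a set \<Rightarrow> ('a::metric_space \<Rightarrow> 'a) \<Rightarrow> bool" where
  "two_sided_limit_shadowing X f \<longleftrightarrow> (\<forall>x. two_sided_asymptotic_pseudo_orbit X f x \<longrightarrow>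
     (\<exists>z. full_trajectory X f z \<and> ((\<lambda>i. dist (z i) (x i)) \<longlongrightarrow> 0) at_top \<and>
          ((\<lambda>i. dist (z i) (x i)) \<longlongrightarrow> 0) at_bot))"

definition two_sided_orbital_limit_shadowing :: "'a set \<Rightarrow> ('a::metric_space \<Rightarrow> 'a) \<Rightarrow> bool" where
  "two_sided_orbital_limit_shadowing X f \<longleftrightarrow> (\<forall>x. two_sided_asymptotic_pseudo_orbit X f x \<longrightarrow>
     (\<exists>z. full_trajectory X f z \<and> alpha_limit z = alpha_limit x \<and> omega_limit z = omega_limit x))"

definition delta_restricted_two_sided_orbital_limit_shadowing :: "'a set \<Rightarrow> ('a::metric_space \<Rightarrow> 'a) \<Rightarrow> bool" where
  "delta_restricted_two_sided_orbital_limit_shadowing X f \<longleftrightarrow> (\<exists>\<delta>>0. \<forall>x.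
     two_sided_asymptotic_delta_pseudo_orbit X f \<delta> x \<longrightarrow>
     (\<exists>z. full_trajectory X f z \<and> alpha_limit z = alpha_limit x \<and> omega_limit z = omega_limit x))"

end

theory Submission
  imports Defs
begin

fun chn :: "('a::metric_space \<Rightarrow> 'a) \<Rightarrow> real \<Rightarrow> 'a list \<Rightarrow> 'a \<Rightarrow> bool" where
  "chn f e [] v = True"
| "chn f e [x] v = (dist (f x) v < e)"
| "chn f e (x#y#ys) v = (dist (f x) y < e \<and> chn f e (y#ys) v)"

lemma chn_append: "l \<noteq> [] \<Longrightarrow> m \<noteq> [] \<Longrightarrow> chn f e l (hd m) \<Longrightarrow> chn f e m v \<Longrightarrow> chn f e (l @ m) v"
proof (induction l)
  case Nil then show ?case by simp
next
  case (Cons x xs)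
  show ?case
  proof (cases xs)
    case Nil
    then show ?thesis using Cons.prems by (cases m) auto
  next
    case (Cons y ys)
    then show ?thesis using Cons.prems Cons.IH by auto
  qed
qed

lemma chn_last: "chn f e l v \<Longrightarrow> l \<noteq> [] \<Longrightarrow> dist (f (last l)) v < e"
  by (induction f e l v rule: chn.induct) auto

lemma chn_adj: "chn f e (pre @ y # z # s) v \<Longrightarrow> dist (f y) z < e"
proof (induction pre)
  case Nil then show ?case by simp
next
  case (Cons p pre')
  obtain q qs where q: "pre' @ y # z # s = q # qs" by (cases "pre' @ y # z # s") auto
  from Cons.prems have "chn f e (q # qs) v" by (simp add: q)
  then show ?case using Cons.IH q by simp
qed

lemma chn_map: "(\<forall>i<N. dist (f (c i)) (c (Suc i)) < e) \<Longrightarrow> N \<ge> 1 \<Longrightarrow> chn f e (map c [0..<N]) (c N)"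
proof (induction N)
  case 0 then show ?case by simp
next
  case (Suc n)
  show ?case
  proof (cases "n = 0")
    case True then show ?thesis using Suc.prems by simp
  next
    case False
    have "chn f e (map c [0..<n] @ [c n]) (c (Suc n))"
      apply (rule chn_append) using Suc False by auto
    then show ?thesis by simp
  qed
qed

lemma chain_exists:
  assumes "internally_chain_transitive f A" "u \<in> A" "v \<in> A" "e > 0"
  shows "\<exists>l. l \<noteq> [] \<and> hd l = u \<and> set l \<subseteq> A \<and> chn f e l v"
proof -
  obtain N c where c: "N \<ge> 1" "c 0 = u" "c N = v" "\<forall>i\<le>N. c i \<in> A" "\<forall>i<N. dist (f (c i)) (c (Suc i)) < e"
    using assms(1)[unfolded internally_chain_transitive_def, rule_format, OF assms(2) assms(3) assms(4)] by blast
  show ?thesis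
    apply (rule exI[of _ "map c [0..<N]"])
    using c chn_map[of N f c e] by (auto simp: hd_map)
qed

lemma loop_exists:
  assumes "internally_chain_transitive f A" "a \<in> A" "e > 0" "finite P" "P \<subseteq> A"
  shows "\<exists>l. l \<noteq> [] \<and> hd l = a \<and> set l \<subseteq> A \<and> P \<subseteq> set l \<and> chn f e l a"
  using assms(4,5)
proof (induction P rule: finite_induct)
  case empty
  then show ?case using chain_exists[OF assms(1,2,2,3)] by auto
next
  case (insert p P)
  then obtain l where l: "l \<noteq> [] \<and> hd l = a \<and> set l \<subseteq> A \<and> P \<subseteq> set l \<and> chn f e l a" by auto
  obtain l1 where l1: "l1 \<noteq> [] \<and> hd l1 = a \<and> set l1 \<subseteq> A \<and> chn f e l1 p"
    using chain_exists[OF assms(1,2) _ assms(3), of p] insert by auto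
  obtain l2 where l2: "l2 \<noteq> [] \<and> hd l2 = p \<and> set l2 \<subseteq> A \<and> chn f e l2 a"
    using chain_exists[OF assms(1) _ assms(2,3), of p] insert by auto
  have c12: "chn f e (l1 @ l2) a" using chn_append l1 l2 by metis
  have "chn f e (l @ (l1 @ l2)) a" using chn_append[of l "l1 @ l2"] l l1 c12 by auto
  moreover have "p \<in> set l2" using l2 by (cases l2) auto
  ultimately show ?case using l l1 l2 by (intro exI[of _ "l @ l1 @ l2"]) auto
qed

lemma net_loop_exists:
  assumes "internally_chain_transitive f A" "a \<in> A" "e > 0" "compact A" "r > 0"
  shows "\<exists>l. l \<noteq> [] \<and> hd l = a \<and> set l \<subseteq> A \<and> chn f e l a \<and> (\<forall>y\<in>A. \<exists>w\<in>set l. dist w y < r)"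
proof -
  have "A \<subseteq> \<Union>((\<lambda>x. ball x r) ` A)" using assms(5) by auto
  then obtain P where P: "P \<subseteq> A" "finite P" "A \<subseteq> \<Union>((\<lambda>x. ball x r) ` P)"
    using compactE_image[OF assms(4), of A "\<lambda>x. ball x r"] by blast
  obtain l where l: "l \<noteq> [] \<and> hd l = a \<and> set l \<subseteq> A \<and> P \<subseteq> set l \<and> chn f e l a"
    using loop_exists[OF assms(1,2,3) P(2,1)] by blast
  show ?thesis using l P(3) by (auto intro!: exI[of _ l]) (fastforce)
qed

definition mstep :: "(nat \<Rightarrow> 'a list) \<Rightarrow> nat \<times> 'a list \<Rightarrow> nat \<times> 'a list" where
  "mstep Q s = (if length (snd s) \<le> 1 then (Suc (fst s), Q (Suc (fst s))) else (fst s, tl (snd s)))"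

primrec mst :: "(nat \<Rightarrow> 'a list) \<Rightarrow> nat \<Rightarrow> nat \<Rightarrow> nat \<times> 'a list" where
  "mst Q k0 0 = (k0, Q k0)"
| "mst Q k0 (Suc n) = mstep Q (mst Q k0 n)"

primrec ss :: "(nat \<Rightarrow> 'a list) \<Rightarrow> nat \<Rightarrow> nat \<Rightarrow> nat" where
  "ss Q k0 0 = 0"
| "ss Q k0 (Suc j) = ss Q k0 j + length (Q (k0 + j))"

lemma mst_inv:
  assumes "\<forall>k. Q k \<noteq> []"
  shows "\<exists>pre. Q (fst (mst Q k0 n)) = pre @ snd (mst Q k0 n) \<and> snd (mst Q k0 n) \<noteq> []"
proof (induction n)
  case 0 then show ?case using assms by simp
next
  case (Suc n)
  then obtain pre where p: "Q (fst (mst Q k0 n)) = pre @ snd (mst Q k0 n)" "snd (mst Q k0 n) \<noteq> []" by blast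
  show ?case
  proof (cases "length (snd (mst Q k0 n)) \<le> 1")
    case True then show ?thesis using assms by (simp add: mstep_def)
  next
    case False
    then obtain y ys where r: "snd (mst Q k0 n) = y # ys" "ys \<noteq> []"
      by (cases "snd (mst Q k0 n)") auto
    show ?thesis using False p r by (auto simp: mstep_def intro!: exI[of _ "pre @ [y]"])
  qed
qed

lemma mst_drop:
  assumes "mst Q k0 n = (k, r)" "j < length r"
  shows "mst Q k0 (n + j) = (k, drop j r)"
  using assms(2)
proof (induction j)
  case 0 then show ?case using assms(1) by simp
next
  case (Suc j)
  then have IH: "mst Q k0 (n + j) = (k, drop j r)" by simp
  have len: "\<not> length (drop j r) \<le> 1" using Suc.prems by simp
  have "mst Q k0 (n + Suc j) = mstep Q (mst Q k0 (n + j))" by simp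
  also have "\<dots> = (k, tl (drop j r))" using len unfolding IH mstep_def by simp
  also have "tl (drop j r) = drop (Suc j) r" by (metis drop_Suc tl_drop)
  finally show ?case .
qed

lemma mst_next_level:
  assumes "mst Q k0 n = (k, r)" "r \<noteq> []"
  shows "mst Q k0 (n + length r) = (Suc k, Q (Suc k))"
proof -
  have l: "length r - 1 < length r" using assms(2) by simp
  have A1: "mst Q k0 (n + (length r - 1)) = (k, drop (length r - 1) r)"
    by (rule mst_drop[OF assms(1) l])
  have A2: "n + length r = Suc (n + (length r - 1))" using assms(2) by (cases r) auto
  have A3: "length (drop (length r - 1) r) \<le> 1" by simp
  have "mst Q k0 (n + length r) = mstep Q (mst Q k0 (n + (length r - 1)))" unfolding A2 by simp
  also have "\<dots> = (Suc k, Q (Suc k))" unfolding A1 mstep_def using A3 by simp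
  finally show ?thesis .
qed

lemma mst_ss:
  assumes "\<forall>k. Q k \<noteq> []"
  shows "mst Q k0 (ss Q k0 j) = (k0 + j, Q (k0 + j)) \<and> j \<le> ss Q k0 j"
proof (induction j)
  case 0 then show ?case by simp
next
  case (Suc j)
  then have "mst Q k0 (ss Q k0 j + length (Q (k0 + j))) = (Suc (k0 + j), Q (Suc (k0 + j)))"
    using mst_next_level[of Q k0 "ss Q k0 j" "k0 + j" "Q (k0 + j)"] assms Suc.IH by simp
  moreover have "length (Q (k0 + j)) \<ge> 1" using assms by (simp add: Suc_le_eq)
  ultimately show ?case using Suc by simp
qed

lemma mst_mono: "fst (mst Q k0 n) \<le> fst (mst Q k0 (n + m))"
proof (induction m)
  case 0 then show ?case by simp
next
  case (Suc m)
  have "fst (mst Q k0 (n + m)) \<le> fst (mst Q k0 (n + Suc m))" by (simp add: mstep_def)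
  then show ?case using Suc by simp
qed

lemma mst_level:
  assumes "\<forall>k. Q k \<noteq> []" "n \<ge> ss Q k0 j"
  shows "k0 + j \<le> fst (mst Q k0 n)"
proof -
  have "fst (mst Q k0 (ss Q k0 j)) \<le> fst (mst Q k0 (ss Q k0 j + (n - ss Q k0 j)))" by (rule mst_mono)
  moreover have "ss Q k0 j + (n - ss Q k0 j) = n" using assms(2) by simp
  moreover have "fst (mst Q k0 (ss Q k0 j)) = k0 + j" using mst_ss[OF assms(1), of k0 j] by simp
  ultimately show ?thesis by simp
qed

lemma mst_visit:
  assumes "\<forall>k. Q k \<noteq> []" "\<forall>k. (\<forall>y\<in>A. \<exists>w\<in>set (Q k). dist w y < 1 / (real k + 1))"
    "y \<in> A" "e > 0"
  shows "\<exists>n>M. dist (hd (snd (mst Q k0 n))) y < e"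
proof -
  obtain k where k0: "inverse (real (Suc k)) < e" using reals_Archimedean[OF assms(4)] by blast
  have k: "1 / (real k + 1) < e" using k0 by (simp add: inverse_eq_divide add.commute)
  define j where "j = Suc M + k"
  have s: "mst Q k0 (ss Q k0 j) = (k0 + j, Q (k0 + j))" "j \<le> ss Q k0 j" using mst_ss[OF assms(1)] by auto
  obtain w where w: "w \<in> set (Q (k0 + j))" "dist w y < 1 / (real (k0 + j) + 1)" using assms(2,3) by blast
  obtain i where i: "i < length (Q (k0 + j))" "Q (k0 + j) ! i = w" using w(1) by (meson in_set_conv_nth)
  have "mst Q k0 (ss Q k0 j + i) = (k0 + j, drop i (Q (k0 + j)))" using mst_drop[OF s(1) i(1)] .
  then have h: "hd (snd (mst Q k0 (ss Q k0 j + i))) = w" using i by (simp add: hd_drop_conv_nth)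
  have le: "1 / (real (k0 + j) + 1) \<le> 1 / (real k + 1)"
    by (rule divide_left_mono) (auto simp: j_def)
  have m: "ss Q k0 j + i > M" using s(2) by (simp add: j_def)
  have d: "dist w y < e" using w(2) le k by linarith
  show ?thesis
    apply (rule exI[of _ "ss Q k0 j + i"])
    using h m d by simp
qed

lemma mst_trans:
  assumes "mst Q k0 n = (k, r)" "r \<noteq> []"
  shows "(\<exists>y z s. r = y # z # s \<and> mst Q k0 (Suc n) = (k, z # s)) \<or>
         (r = [hd r] \<and> mst Q k0 (Suc n) = (Suc k, Q (Suc k)))"
proof (cases "length r \<le> 1")
  case True
  then have "r = [hd r]" using assms(2) by (cases r) auto
  then show ?thesis using assms(1) True by (simp add: mstep_def)
next
  case False
  then obtain y z s where "r = y # z # s" using assms(2)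
    by (cases r; cases "tl r") auto
  then show ?thesis using assms(1) by (simp add: mstep_def)
qed

lemma omega_iff: "y \<in> omega_limit x \<longleftrightarrow> (\<forall>M::nat. \<forall>e>0. \<exists>n. n > int M \<and> dist (x n) y < e)"
  unfolding omega_limit_def by (simp add: closure_approachable) blast

lemma alpha_iff: "y \<in> alpha_limit x \<longleftrightarrow> (\<forall>M::nat. \<forall>e>0. \<exists>n. n < - int M \<and> dist (x n) y < e)"
  unfolding alpha_limit_def by (simp add: closure_approachable) blast

lemma err_small:
  assumes "\<forall>k. Q k \<noteq> []" "\<forall>n. g n < \<delta> / (real (fst (mst Q k0 n)) + 1)" "\<delta> > 0"
  shows "\<forall>e>0. \<exists>N. \<forall>n\<ge>N. g n < e"
proof (intro allI impI)
  fix e :: real assume e: "e > 0"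
  obtain j where j: "\<delta> / e < real j" using reals_Archimedean2 by blast
  have "\<delta> / (real j + 1) < e"
    using j e assms(3) by (simp add: field_simps)
  show "\<exists>N. \<forall>n\<ge>N. g n < e"
  proof (intro exI allI impI)
    fix n assume "n \<ge> ss Q k0 j"
    then have "k0 + j \<le> fst (mst Q k0 n)" using mst_level[OF assms(1)] by blast
    then have "\<delta> / (real (fst (mst Q k0 n)) + 1) \<le> \<delta> / (real j + 1)"
      using assms(3) by (intro divide_left_mono) auto
    then show "g n < e" using assms(2)[rule_format, of n] \<open>\<delta> / (real j + 1) < e\<close> by linarith
  qed
qed

lemma construct:
  fixes X :: "'a::metric_space set" and f :: "'a \<Rightarrow> 'a"
  assumes "compact X" "A \<in> ICT X f" "\<delta> > 0"
  shows "\<exists>x. two_sided_asymptotic_delta_pseudo_orbit X f \<delta> x \<and> alpha_limit x = A \<and> omega_limit x = A"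
proof -
  have AX: "A \<subseteq> X" and Ane: "A \<noteq> {}" and Acl: "closed A" and ict: "internally_chain_transitive f A"
    using assms(2) by (auto simp: ICT_def)
  have cA: "compact A" using closed_Int_compact[OF Acl assms(1)] AX by (simp add: Int_absorb2)
  obtain a where a: "a \<in> A" using Ane by blast
  have "\<forall>k. \<exists>l. l \<noteq> [] \<and> hd l = a \<and> set l \<subseteq> A \<and> chn f (\<delta> / (real k + 1)) l a \<and>
        (\<forall>y\<in>A. \<exists>w\<in>set l. dist w y < 1 / (real k + 1))"
    using net_loop_exists[OF ict a _ cA] assms(3) by auto
  then have "\<exists>L. \<forall>k. L k \<noteq> [] \<and> hd (L k) = a \<and> set (L k) \<subseteq> A \<and> chn f (\<delta> / (real k + 1)) (L k) a \<and>
        (\<forall>y\<in>A. \<exists>w\<in>set (L k). dist w y < 1 / (real k + 1))"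
    by (rule choice)
  then obtain L where LL: "\<forall>k. L k \<noteq> [] \<and> hd (L k) = a \<and> set (L k) \<subseteq> A \<and> chn f (\<delta> / (real k + 1)) (L k) a \<and>
        (\<forall>y\<in>A. \<exists>w\<in>set (L k). dist w y < 1 / (real k + 1))" by (elim exE)
  have L: "\<And>k. L k \<noteq> []" "\<And>k. hd (L k) = a" "\<And>k. set (L k) \<subseteq> A"
    "\<And>k. chn f (\<delta> / (real k + 1)) (L k) a" "\<And>k. \<forall>y\<in>A. \<exists>w\<in>set (L k). dist w y < 1 / (real k + 1)"
    using LL by simp_all
  define R where "R k = rev (L k)" for k
  have R: "\<And>k. R k \<noteq> []" "\<And>k. set (R k) \<subseteq> A" "\<And>k. \<forall>y\<in>A. \<exists>w\<in>set (R k). dist w y < 1 / (real k + 1)"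
    using L by (auto simp: R_def)
  define F where "F n = hd (snd (mst L 0 n))" for n
  define B where "B n = hd (snd (mst R 1 n))" for n
  have FA: "F n \<in> A" for n
  proof -
    obtain pre where "L (fst (mst L 0 n)) = pre @ snd (mst L 0 n)" "snd (mst L 0 n) \<noteq> []"
      using mst_inv[of L 0 n] L(1) by blast
    then show ?thesis using L(3)[of "fst (mst L 0 n)"] by (auto simp: F_def)
  qed
  have BA: "B n \<in> A" for n
  proof -
    obtain pre where "R (fst (mst R 1 n)) = pre @ snd (mst R 1 n)" "snd (mst R 1 n) \<noteq> []"
      using mst_inv[of R 1 n] R(1) by blast
    then show ?thesis using R(2)[of "fst (mst R 1 n)"] by (auto simp: B_def)
  qed
  have Ferr: "dist (f (F n)) (F (Suc n)) < \<delta> / (real (fst (mst L 0 n)) + 1)" for n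
  proof -
    obtain k r where st: "mst L 0 n = (k, r)" by (cases "mst L 0 n") auto
    obtain pre where pre: "L k = pre @ r" "r \<noteq> []"
      using mst_inv[of L 0 n] L(1) st by auto
    from mst_trans[OF st pre(2)] show ?thesis
    proof
      assume "\<exists>y z s. r = y # z # s \<and> mst L 0 (Suc n) = (k, z # s)"
      then obtain y z s where "r = y # z # s" "mst L 0 (Suc n) = (k, z # s)" by blast
      then show ?thesis using chn_adj[of f _ pre y z s a] L(4)[of k] pre st by (simp add: F_def)
    next
      assume h: "r = [hd r] \<and> mst L 0 (Suc n) = (Suc k, L (Suc k))"
      have "last (L k) = hd r" using pre h by (metis last_snoc)
      then show ?thesis using chn_last[OF L(4)[of k] L(1)] h st L(2) by (simp add: F_def)
    qed
  qed
  have Berr: "dist (f (B (Suc n))) (B n) < \<delta> / (real (fst (mst R 1 n)) + 1)" for n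
  proof -
    obtain k r where st: "mst R 1 n = (k, r)" by (cases "mst R 1 n") auto
    obtain pre where pre: "R k = pre @ r" "r \<noteq> []"
      using mst_inv[of R 1 n] R(1) st by auto
    from mst_trans[OF st pre(2)] show ?thesis
    proof
      assume "\<exists>y z s. r = y # z # s \<and> mst R 1 (Suc n) = (k, z # s)"
      then obtain y z s where yz: "r = y # z # s" "mst R 1 (Suc n) = (k, z # s)" by blast
      then have "L k = rev s @ z # y # rev pre" using pre by (simp add: R_def rev_swap)
      then show ?thesis using chn_adj[of f _ "rev s" z y "rev pre" a] L(4)[of k] yz st by (simp add: B_def)
    next
      assume h: "r = [hd r] \<and> mst R 1 (Suc n) = (Suc k, R (Suc k))"
      have Rk: "R k = pre @ [hd r]" using pre(1) h by metis
      have "L k = rev (R k)" by (simp add: R_def)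
      then have "L k = hd r # rev pre" using Rk by simp
      then have "hd r = a" using L(2)[of k] by simp
      moreover have "dist (f (last (L (Suc k)))) a < \<delta> / (real (Suc k) + 1)"
        using chn_last[OF L(4)[of "Suc k"] L(1)] .
      moreover have "\<delta> / (real (Suc k) + 1) \<le> \<delta> / (real k + 1)"
        using assms(3) by (intro divide_left_mono) auto
      ultimately show ?thesis using h st L(1)[of "Suc k"] by (simp add: B_def R_def hd_rev)
    qed
  qed
  have F0: "F 0 = a" using L(2) by (simp add: F_def)
  have B0: "B 0 = last (L 1)" using L(1) by (simp add: B_def R_def hd_rev)
  have junction: "dist (f (B 0)) (F 0) < \<delta>"
  proof -
    have "dist (f (last (L 1))) a < \<delta> / (real 1 + 1)" using chn_last[OF L(4)[of 1] L(1)] by simp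
    then show ?thesis using B0 F0 assms(3) by simp
  qed
  have Fd: "dist (f (F n)) (F (Suc n)) < \<delta>" for n
  proof -
    have "\<delta> / (real (fst (mst L 0 n)) + 1) \<le> \<delta> / 1" using assms(3) by (intro divide_left_mono) auto
    then show ?thesis using Ferr[of n] by simp
  qed
  have Bd: "dist (f (B (Suc n))) (B n) < \<delta>" for n
  proof -
    have "\<delta> / (real (fst (mst R 1 n)) + 1) \<le> \<delta> / 1" using assms(3) by (intro divide_left_mono) auto
    then show ?thesis using Berr[of n] by simp
  qed
  have Fs: "\<forall>e>0. \<exists>N. \<forall>n\<ge>N. dist (f (F n)) (F (Suc n)) < e"
    by (rule err_small[of L "\<lambda>n. dist (f (F n)) (F (Suc n))" \<delta> 0]) (use L(1) Ferr assms(3) in auto)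
  have Bs: "\<forall>e>0. \<exists>N. \<forall>n\<ge>N. dist (f (B (Suc n))) (B n) < e"
    by (rule err_small[of R "\<lambda>n. dist (f (B (Suc n))) (B n)" \<delta> 1]) (use R(1) Berr assms(3) in auto)
  define x where "x i = (if 0 \<le> i then F (nat i) else B (nat (- i - 1)))" for i :: int
  have xA: "x i \<in> A" for i using FA BA by (simp add: x_def)
  have xd: "dist (f (x i)) (x (i + 1)) < \<delta>" for i
  proof (cases "0 \<le> i")
    case True
    then have "nat (i + 1) = Suc (nat i)" by simp
    then show ?thesis using True Fd[of "nat i"] by (simp add: x_def)
  next
    case False
    show ?thesis
    proof (cases "i = -1")
      case True then show ?thesis using junction by (simp add: x_def)
    next
      case False2: False
      then have "nat (- i - 1) = Suc (nat (- (i + 1) - 1))" using False by simp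
      then show ?thesis using False False2 Bd[of "nat (- (i + 1) - 1)"] by (simp add: x_def)
    qed
  qed
  have top: "((\<lambda>i. dist (f (x i)) (x (i + 1))) \<longlongrightarrow> 0) at_top"
    unfolding tendsto_iff eventually_at_top_linorder
  proof (intro allI impI)
    fix e :: real assume "e > 0"
    then obtain N where N: "\<forall>n\<ge>N. dist (f (F n)) (F (Suc n)) < e" using Fs by blast
    show "\<exists>N0. \<forall>i\<ge>N0. dist (dist (f (x i)) (x (i + 1))) 0 < e"
    proof (intro exI allI impI)
      fix i :: int assume i: "i \<ge> int N"
      then have "nat (i + 1) = Suc (nat i)" "0 \<le> i" "nat i \<ge> N" by auto
      then show "dist (dist (f (x i)) (x (i + 1))) 0 < e" using N by (simp add: x_def)
    qed
  qed
  have bot: "((\<lambda>i. dist (f (x i)) (x (i + 1))) \<longlongrightarrow> 0) at_bot"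
    unfolding tendsto_iff eventually_at_bot_linorder
  proof (intro allI impI)
    fix e :: real assume "e > 0"
    then obtain N where N: "\<forall>n\<ge>N. dist (f (B (Suc n))) (B n) < e" using Bs by blast
    show "\<exists>N0. \<forall>i\<le>N0. dist (dist (f (x i)) (x (i + 1))) 0 < e"
    proof (intro exI allI impI)
      fix i :: int assume i: "i \<le> - int N - 2"
      then have "nat (- i - 1) = Suc (nat (- (i + 1) - 1))" "\<not> 0 \<le> i" "\<not> 0 \<le> i + 1"
        "nat (- (i + 1) - 1) \<ge> N" by auto
      then show "dist (dist (f (x i)) (x (i + 1))) 0 < e" using N[rule_format, of "nat (- (i + 1) - 1)"]
        by (simp add: x_def)
    qed
  qed
  have sub: "y \<in> A" if H: "\<forall>e>0. \<exists>n. dist (x n) y < e" for y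
  proof -
    have "y \<in> closure A" unfolding closure_approachable
    proof (intro allI impI)
      fix e :: real assume "e > 0"
      then obtain n where "dist (x n) y < e" using H by blast
      then show "\<exists>w\<in>A. dist w y < e" using xA by blast
    qed
    then show ?thesis using Acl by simp
  qed
  have om: "omega_limit x = A"
  proof
    show "omega_limit x \<subseteq> A"
    proof
      fix y assume "y \<in> omega_limit x"
      then have "\<forall>e>0. \<exists>n. dist (x n) y < e" unfolding omega_iff by blast
      then show "y \<in> A" by (rule sub)
    qed
    show "A \<subseteq> omega_limit x"
    proof (intro subsetI)
      fix y assume y: "y \<in> A"
      show "y \<in> omega_limit x" unfolding omega_iff
      proof (intro allI impI)
      fix M :: nat and e :: real assume e: "e > 0"
      obtain n where "n > M" "dist (F n) y < e"
        using mst_visit[of L A y e M 0] L(1,5) y e by (auto simp: F_def)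
      then show "\<exists>n. n > int M \<and> dist (x n) y < e" by (intro exI[of _ "int n"]) (simp add: x_def)
    qed
    qed
  qed
  have al: "alpha_limit x = A"
  proof
    show "alpha_limit x \<subseteq> A"
    proof
      fix y assume "y \<in> alpha_limit x"
      then have "\<forall>e>0. \<exists>n. dist (x n) y < e" unfolding alpha_iff by blast
      then show "y \<in> A" by (rule sub)
    qed
    show "A \<subseteq> alpha_limit x"
    proof (intro subsetI)
      fix y assume y: "y \<in> A"
      show "y \<in> alpha_limit x" unfolding alpha_iff
      proof (intro allI impI)
      fix M :: nat and e :: real assume e: "e > 0"
      obtain n where "n > M" "dist (B n) y < e"
        using mst_visit[of R A y e M 1] R(1,3) y e by (auto simp: B_def)
      then show "\<exists>n. n < - int M \<and> dist (x n) y < e" by (intro exI[of _ "- int n - 1"]) (simp add: x_def)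
    qed
    qed
  qed
  show ?thesis
    unfolding two_sided_asymptotic_delta_pseudo_orbit_def two_sided_asymptotic_pseudo_orbit_def
    using xA AX xd top bot om al by (intro exI[of _ x]) auto
qed

lemma omega_sub:
  assumes "((\<lambda>i. dist (z i) (x i)) \<longlongrightarrow> 0) at_top"
  shows "omega_limit z \<subseteq> omega_limit x"
proof (intro subsetI)
  fix y assume "y \<in> omega_limit z"
  then have y: "\<forall>M::nat. \<forall>e>0. \<exists>n>int M. dist (z n) y < e" by (simp add: omega_iff)
  show "y \<in> omega_limit x" unfolding omega_iff
  proof (intro allI impI)
  fix M :: nat and e :: real assume e: "e > 0"
  obtain N where N: "\<forall>i\<ge>N. dist (dist (z i) (x i)) 0 < e / 2"
    using assms e unfolding tendsto_iff eventually_at_top_linorder by (meson half_gt_zero)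
  obtain n where n: "n > int (max M (nat N))" "dist (z n) y < e / 2" using y e by (meson half_gt_zero)
  have "dist (z n) (x n) < e / 2" using N n(1) by force
  then have "dist (x n) y < e" using n(2) dist_triangle[of "x n" y "z n"] by (simp add: dist_commute)
  then show "\<exists>n>int M. dist (x n) y < e" using n(1) by (intro exI[of _ n]) auto
qed
qed

lemma alpha_sub:
  assumes "((\<lambda>i. dist (z i) (x i)) \<longlongrightarrow> 0) at_bot"
  shows "alpha_limit z \<subseteq> alpha_limit x"
proof (intro subsetI)
  fix y assume "y \<in> alpha_limit z"
  then have y: "\<forall>M::nat. \<forall>e>0. \<exists>n< - int M. dist (z n) y < e" by (simp add: alpha_iff)
  show "y \<in> alpha_limit x" unfolding alpha_iff
  proof (intro allI impI)
  fix M :: nat and e :: real assume e: "e > 0"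
  obtain N where N: "\<forall>i\<le>N. dist (dist (z i) (x i)) 0 < e / 2"
    using assms e unfolding tendsto_iff eventually_at_bot_linorder by (meson half_gt_zero)
  obtain n where n: "n < - int (max M (nat (- N)))" "dist (z n) y < e / 2" using y e by (meson half_gt_zero)
  have "dist (z n) (x n) < e / 2" using N n(1) by force
  then have "dist (x n) y < e" using n(2) dist_triangle[of "x n" y "z n"] by (simp add: dist_commute)
  then show "\<exists>n< - int M. dist (x n) y < e" using n(1) by (intro exI[of _ n]) auto
qed
qed

lemma shadow_delta:
  assumes "two_sided_limit_shadowing X f \<or> two_sided_orbital_limit_shadowing X f
         \<or> delta_restricted_two_sided_orbital_limit_shadowing X f"
  shows "\<exists>\<delta>>0. \<forall>x. two_sided_asymptotic_delta_pseudo_orbit X f \<delta> x \<longrightarrow>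
     (\<exists>z. full_trajectory X f z \<and> alpha_limit z = alpha_limit x \<and> omega_limit z = omega_limit x)"
proof -
  have "two_sided_orbital_limit_shadowing X f" if LS: "two_sided_limit_shadowing X f"
    unfolding two_sided_orbital_limit_shadowing_def
  proof (intro allI impI)
    fix x assume "two_sided_asymptotic_pseudo_orbit X f x"
    then obtain z where z: "full_trajectory X f z" "((\<lambda>i. dist (z i) (x i)) \<longlongrightarrow> 0) at_top"
          "((\<lambda>i. dist (z i) (x i)) \<longlongrightarrow> 0) at_bot"
      using LS unfolding two_sided_limit_shadowing_def by blast
    have z': "((\<lambda>i. dist (x i) (z i)) \<longlongrightarrow> 0) at_top" "((\<lambda>i. dist (x i) (z i)) \<longlongrightarrow> 0) at_bot"
      using z(2,3) by (simp_all add: dist_commute)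
    show "\<exists>z. full_trajectory X f z \<and> alpha_limit z = alpha_limit x \<and> omega_limit z = omega_limit x"
      using z omega_sub[OF z(2)] omega_sub[OF z'(1)] alpha_sub[OF z(3)] alpha_sub[OF z'(2)]
      by blast
  qed
  moreover have "delta_restricted_two_sided_orbital_limit_shadowing X f" if "two_sided_orbital_limit_shadowing X f"
    using that unfolding delta_restricted_two_sided_orbital_limit_shadowing_def
      two_sided_orbital_limit_shadowing_def two_sided_asymptotic_delta_pseudo_orbit_def
    by (intro exI[of _ 1]) auto
  ultimately show ?thesis using assms unfolding delta_restricted_two_sided_orbital_limit_shadowing_def by blast
qed

theorem mainTheorem2:
  fixes X :: "'a::metric_space set" and f :: "'a \<Rightarrow> 'a"
  assumes "compact X" and "continuous_on X f" and "f ` X \<subseteq> X"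
    and "two_sided_limit_shadowing X f \<or> two_sided_orbital_limit_shadowing X f
         \<or> delta_restricted_two_sided_orbital_limit_shadowing X f"
  shows "property_Pe X f"
  unfolding property_Pe_def
proof
  fix A assume A: "A \<in> ICT X f"
  obtain \<delta> where d: "\<delta> > 0" "\<forall>x. two_sided_asymptotic_delta_pseudo_orbit X f \<delta> x \<longrightarrow>
     (\<exists>z. full_trajectory X f z \<and> alpha_limit z = alpha_limit x \<and> omega_limit z = omega_limit x)"
    using shadow_delta[OF assms(4)] by blast
  obtain x where "two_sided_asymptotic_delta_pseudo_orbit X f \<delta> x" "alpha_limit x = A" "omega_limit x = A"
    using construct[OF assms(1) A d(1)] by blast
  then show "\<exists>x. full_trajectory X f x \<and> alpha_limit x = A \<and> omega_limit x = A"
    using d(2) by metis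
qed

end
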